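(* Let $k\ge2$, $n\ge1$, $A=\{0<1<\cdots<k-1\}$, and let $v\in\Gamma_{k,n}$. Then the standard permutation $\pi(v)$ of $[k^{n}]$ is $\pi=\bigcup_{i=0}^{k-1}\pi_{i}$, a union of $k$ order-preserving injective partial maps with $\mathrm{dom}\,\pi_{i}=\{x\in[k^{n}]:\text{the first digit of the }n\text{-digit base-}k\text{ representation of }x\text{ is }i\}$ for $0\le i\le k-1$. The sets $\mathrm{ran}\,\pi_{i}$ partition $[k^{n}]$, and each $\mathrm{ran}\,\pi_{i}$ is a transversal of the partition of $[k^{n}]$ into the intervals $[jk,(j+1)k-1]$, $0\le j\le k^{n-1}-1$ (i.e. meets each such interval in exactly one point).
   Context: $[N]=\{0<1<\cdots<N-1\}$. $G\subseteq A^{k}$ is the set of words of length $k$ in which each letter of $A$ occurs exactly once, and $\Gamma_{k,n}=G^{k^{n-1}}$, the set of concatenations of $k^{n-1}$ words from $G$. Standard permutation of $w\in A^{N}$: let $f(w)$ be the letters of $w$ in nondecreasing order; for each letter $a$, $\pi_{a}$ is the unique order-preserving injective partial map on $[N]$ with domain the set of positions (from $0$) of $a$ in $f(w)$ and range the set of positions of $a$ in $w$; $\pi(w)=\bigcup_{a}\pi_{a}$. *)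

theory Defs
  imports Main
begin

text \<open>Words over the alphabet A = {0 < 1 < ... < k-1} are lists of naturals.
  Positions are counted from 0.  Partial maps on [N] are represented by their graphs
  (relations of type nat rel).\<close>

definition G :: "nat \<Rightarrow> nat list set" where
  "G k = {w. length w = k \<and> set w \<subseteq> {..<k} \<and> (\<forall>a<k. count_list w a = 1)}"

definition Gamma :: "nat \<Rightarrow> nat \<Rightarrow> nat list set" where
  "Gamma k n = {concat ws | ws. length ws = k ^ (n - 1) \<and> (\<forall>w\<in>set ws. w \<in> G k)}"

definition positions :: "nat \<Rightarrow> nat list \<Rightarrow> nat set" where
  "positions a w = {i. i < length w \<and> w ! i = a}"

definition op_inj_pmap :: "nat rel \<Rightarrow> bool" where
  "op_inj_pmap p \<longleftrightarrow> single_valued p \<and> single_valued (p\<inverse>) \<and>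
     (\<forall>x y x' y'. (x, y) \<in> p \<longrightarrow> (x', y') \<in> p \<longrightarrow> x < x' \<longrightarrow> y < y')"

definition std_perm_part :: "nat list \<Rightarrow> nat \<Rightarrow> nat rel" where
  "std_perm_part w a = (THE p. op_inj_pmap p \<and> Domain p = positions a (sort w)
                                \<and> Range p = positions a w)"

definition std_perm :: "nat list \<Rightarrow> nat rel" where
  "std_perm w = (\<Union>a\<in>set w. std_perm_part w a)"

end

theory Submission
  imports Defs "HOL-Library.Multiset"
begin


definition rk :: "nat set \<Rightarrow> nat \<Rightarrow> nat" where
  "rk S x = card {s\<in>S. s < x}"

definition canon :: "nat set \<Rightarrow> nat set \<Rightarrow> nat rel" where
  "canon D R = {(x,y). x \<in> D \<and> y \<in> R \<and> rk D x = rk R y}"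

lemma rk_less: "finite S \<Longrightarrow> x \<in> S \<Longrightarrow> rk S x < card S"
  unfolding rk_def by (rule psubset_card_mono) auto

lemma rk_mono: "finite S \<Longrightarrow> x \<in> S \<Longrightarrow> x < x' \<Longrightarrow> rk S x < rk S x'"
  unfolding rk_def by (rule psubset_card_mono) auto

lemma rk_inj: "finite S \<Longrightarrow> inj_on (rk S) S"
  unfolding inj_on_def
  by (metis linorder_neqE_nat nat_neq_iff rk_mono)

lemma rk_image: "finite S \<Longrightarrow> rk S ` S = {..<card S}"
  apply (rule card_subset_eq)
  using rk_less apply auto[2]
  by (simp add: card_image rk_inj)

lemma rk_le: "finite S \<Longrightarrow> y' \<le> y \<Longrightarrow> rk S y' \<le> rk S y"
  unfolding rk_def by (intro card_mono) auto

lemma canon_ok: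
  assumes "finite D" "finite R" "card D = card R"
  shows "op_inj_pmap (canon D R) \<and> Domain (canon D R) = D \<and> Range (canon D R) = R"
proof (intro conjI)
  show "op_inj_pmap (canon D R)"
    unfolding op_inj_pmap_def single_valued_def canon_def
  proof (intro conjI allI impI)
    fix x y z assume "(x, y) \<in> {(x, y). x \<in> D \<and> y \<in> R \<and> rk D x = rk R y}"
      "(x, z) \<in> {(x, y). x \<in> D \<and> y \<in> R \<and> rk D x = rk R y}"
    then show "y = z" using rk_inj[OF assms(2)] by (auto simp: inj_on_def)
  next
    fix x y z assume "(x, y) \<in> {(x, y). x \<in> D \<and> y \<in> R \<and> rk D x = rk R y}\<inverse>"
      "(x, z) \<in> {(x, y). x \<in> D \<and> y \<in> R \<and> rk D x = rk R y}\<inverse>"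
    then show "y = z" using rk_inj[OF assms(1)] by (auto simp: inj_on_def)
  next
    fix x y x' y' assume a: "(x, y) \<in> {(x, y). x \<in> D \<and> y \<in> R \<and> rk D x = rk R y}"
      "(x', y') \<in> {(x, y). x \<in> D \<and> y \<in> R \<and> rk D x = rk R y}" "x < x'"
    have "rk D x < rk D x'" using rk_mono[OF assms(1), of x x'] a by auto
    then show "y < y'" using a rk_le[OF assms(2), of y' y] by (cases "y' \<le> y") auto
  qed
  show "Domain (canon D R) = D"
  proof
    show "Domain (canon D R) \<subseteq> D" by (auto simp: canon_def)
    show "D \<subseteq> Domain (canon D R)"
    proof
      fix x assume "x \<in> D"
      then have "rk D x \<in> rk R ` R" using rk_image[OF assms(2)] rk_less[OF assms(1)] assms(3) by auto
      then obtain y where "y \<in> R" "rk D x = rk R y" by auto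
      then show "x \<in> Domain (canon D R)" using \<open>x \<in> D\<close> by (auto simp: canon_def)
    qed
  qed
  show "Range (canon D R) = R"
  proof
    show "Range (canon D R) \<subseteq> R" by (auto simp: canon_def)
    show "R \<subseteq> Range (canon D R)"
    proof
      fix y assume "y \<in> R"
      then have "rk R y \<in> rk D ` D" using rk_image[OF assms(1)] rk_less[OF assms(2)] assms(3) by auto
      then obtain x where "x \<in> D" "rk D x = rk R y" by auto
      then show "y \<in> Range (canon D R)" using \<open>y \<in> R\<close> by (auto simp: canon_def)
    qed
  qed
qed

lemma canon_unique:
  assumes "finite D" "finite R" "op_inj_pmap p" "Domain p = D" "Range p = R"
  shows "p = canon D R"
proof -
  have sv: "single_valued p" and svc: "single_valued (p\<inverse>)"
    and ord: "\<And>x y x' y'. (x, y) \<in> p \<Longrightarrow> (x', y') \<in> p \<Longrightarrow> x < x' \<Longrightarrow> y < y'"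
    using assms(3) unfolding op_inj_pmap_def by auto
  have key: "rk D x = rk R y" if xy: "(x,y) \<in> p" for x y
  proof -
    define p' where "p' = {(a,b). (a,b) \<in> p \<and> a < x}"
    have i1: "inj_on fst p'" using sv unfolding inj_on_def p'_def single_valued_def by auto
    have i2: "inj_on snd p'" using svc unfolding inj_on_def p'_def single_valued_def by auto
    have e1: "fst ` p' = {d\<in>D. d < x}"
    proof
      show "fst ` p' \<subseteq> {d \<in> D. d < x}" using assms(4) by (force simp: p'_def)
      show "{d \<in> D. d < x} \<subseteq> fst ` p'"
      proof
        fix d assume "d \<in> {d \<in> D. d < x}"
        then obtain b where "(d,b) \<in> p" "d < x" using assms(4) by auto
        then show "d \<in> fst ` p'" unfolding p'_def by force
      qed
    qed
    have e2: "snd ` p' = {r\<in>R. r < y}"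
    proof
      show "snd ` p' \<subseteq> {r\<in>R. r < y}" using assms(5) ord xy by (force simp: p'_def)
      show "{r\<in>R. r < y} \<subseteq> snd ` p'"
      proof
        fix r assume r: "r \<in> {r\<in>R. r < y}"
        then obtain a where a: "(a,r) \<in> p" using assms(5) by auto
        have "a < x"
        proof (rule ccontr)
          assume "\<not> a < x"
          then consider "a = x" | "x < a" by linarith
          then show False
          proof cases
            case 1 then show ?thesis using sv a xy r unfolding single_valued_def by auto
          next
            case 2 then show ?thesis using ord[OF xy a] r by auto
          qed
        qed
        then show "r \<in> snd ` p'" using a unfolding p'_def by force
      qed
    qed
    have "card {d\<in>D. d < x} = card p'" using card_image[OF i1] e1 by simp
    also have "\<dots> = card {r\<in>R. r < y}" using card_image[OF i2] e2 by simp
    finally show ?thesis unfolding rk_def .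
  qed
  show ?thesis
  proof
    show "p \<subseteq> canon D R" using key assms(4,5) by (auto simp: canon_def)
    show "canon D R \<subseteq> p"
    proof
      fix z assume "z \<in> canon D R"
      then obtain x y where z: "z = (x,y)" "x \<in> D" "y \<in> R" "rk D x = rk R y"
        by (auto simp: canon_def)
      then obtain y' where y': "(x,y') \<in> p" using assms(4) by auto
      then have "y' \<in> R" using assms(5) by auto
      have "rk R y' = rk R y" using key[OF y'] z by simp
      then have "y' = y" using rk_inj[OF assms(2)] \<open>y' \<in> R\<close> z(3) by (auto simp: inj_on_def)
      then show "z \<in> p" using y' z by simp
    qed
  qed
qed

lemma the_canon:
  assumes "finite D" "finite R" "card D = card R"
  shows "(THE p. op_inj_pmap p \<and> Domain p = D \<and> Range p = R) = canon D R"
  apply (rule the_equality)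
  using canon_ok[OF assms] apply blast
  using canon_unique assms by blast



lemma concat_len: "\<forall>w\<in>set ws. length w = k \<Longrightarrow> length (concat ws) = k * length ws"
  by (induction ws) auto

lemma concat_nth: "\<forall>w\<in>set ws. length w = k \<Longrightarrow> j < length ws \<Longrightarrow> r < k \<Longrightarrow>
   concat ws ! (j*k+r) = ws!j!r"
proof (induction ws arbitrary: j)
  case Nil then show ?case by simp
next
  case (Cons w ws)
  show ?case
  proof (cases j)
    case 0 then show ?thesis using Cons by (simp add: nth_append)
  next
    case (Suc j')
    have "j*k+r = k + (j'*k+r)" using Suc by simp
    then show ?thesis using Cons Suc by (simp add: nth_append)
  qed
qed

lemma count_G: "w \<in> G k \<Longrightarrow> count_list w a = (if a < k then 1 else 0)"
  unfolding G_def
  by (auto simp: count_list_0_iff)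

lemma count_concat_G: "\<forall>w\<in>set ws. w \<in> G k \<Longrightarrow> count_list (concat ws) a = length ws * (if a < k then 1 else 0)"
  by (induction ws) (auto simp: count_G)

lemma card_positions: "card (positions a w) = count_list w a"
  unfolding positions_def count_list_eq_length_filter length_filter_conv_card
  by (rule arg_cong[where f=card]) auto

lemma dh2: "(m::nat) > 0 \<Longrightarrow> x < x div m * m + m" by (simp add: add.commute dividend_less_div_times)
lemma dh3: "(m::nat) > 0 \<Longrightarrow> a < k \<Longrightarrow> x < a*m+m \<Longrightarrow> x < k*m"
  by (metis add.commute less_Suc_eq_le linorder_neqE_nat linorder_not_le
    linordered_semiring_strict_class.mult_strict_right_mono mult_Suc order_less_trans)
lemma dh4: "(m::nat) > 0 \<Longrightarrow> a*m \<le> x \<Longrightarrow> x < a*m+m \<Longrightarrow> a = x div m"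
  by (metis add.commute mult.commute div_nat_eqI mult_Suc)

lemma div_set: "(m::nat) > 0 \<Longrightarrow> a < k \<Longrightarrow> {i. i < k*m \<and> a = i div m} = {a*m..<a*m+m}"
  using dh2 dh3 dh4 by auto

lemma count_sorted: "(m::nat) > 0 \<Longrightarrow> count_list (map (\<lambda>x. x div m) [0..<k*m]) a = (if a < k then m else 0)"
proof -
  assume m: "m > 0"
  have "count_list (map (\<lambda>x. x div m) [0..<k*m]) a = card {i. i < k*m \<and> a = i div m}"
    unfolding count_list_eq_length_filter length_filter_conv_card by (intro arg_cong[where f=card]) auto
  also have "\<dots> = (if a < k then m else 0)"
  proof (cases "a < k")
    case True then show ?thesis using div_set[OF m True] by simp
  next
    case False
    then have "{i. i < k*m \<and> a = i div m} = {}"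
      by (auto simp: less_mult_imp_div_less) 
    then show ?thesis using False by simp
  qed
  finally show ?thesis .
qed

lemma uniq_pos:
  assumes "w \<in> G k" "r < k" "r' < k" "w!r = i" "w!r' = i"
  shows "r = r'"
proof -
  have lw: "length w = k" using assms(1) unfolding G_def by auto
  have "w!r \<in> set w" using assms(2) lw by simp
  then have "i < k" using assms(1,4) unfolding G_def by auto
  then have "count_list w i = 1" using count_G[OF assms(1), of i] by simp
  then have "card (positions i w) = 1" unfolding card_positions .
  then obtain z where "positions i w = {z}" using card_1_singleton_iff[of "positions i w"] by auto
  moreover have "r \<in> positions i w" "r' \<in> positions i w" using assms lw unfolding positions_def by auto
  ultimately show ?thesis by auto
qed

theorem lemma3p6:
  fixes k n :: nat and v :: "nat list"
  assumes "k \<ge> 2" and "n \<ge> 1" and "v \<in> Gamma k n"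
  shows "std_perm v = (\<Union>i<k. std_perm_part v i)
    \<and> (\<forall>i<k. op_inj_pmap (std_perm_part v i)
         \<and> Domain (std_perm_part v i) = {x. x < k ^ n \<and> x div k ^ (n - 1) = i})
    \<and> (\<forall>i<k. \<forall>j<k. i \<noteq> j \<longrightarrow> Range (std_perm_part v i) \<inter> Range (std_perm_part v j) = {})
    \<and> (\<Union>i<k. Range (std_perm_part v i)) = {..<k ^ n}
    \<and> (\<forall>i<k. \<forall>j<k ^ (n - 1). \<exists>!x. x \<in> Range (std_perm_part v i) \<and> j * k \<le> x \<and> x \<le> (j + 1) * k - 1)"
proof -
  obtain ws where v: "v = concat ws" "length ws = k^(n-1)" "\<forall>w\<in>set ws. w \<in> G k"
    using assms(3) unfolding Gamma_def by auto
  define m where "m = k^(n-1)"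
  have m0: "m > 0" using assms(1) unfolding m_def by simp
  have km: "k^n = k*m" unfolding m_def using assms(2) by (cases n) auto
  have lw: "\<forall>w\<in>set ws. length w = k" using v(3) unfolding G_def by auto
  have lv: "length v = k*m" unfolding v(1) concat_len[OF lw] v(2) m_def ..
  have cnt: "count_list v a = (if a<k then m else 0)" for a
    unfolding v(1) count_concat_G[OF v(3)] v(2) m_def by simp
  have setv: "set v = {..<k}"
  proof -
    have "a \<in> set v \<longleftrightarrow> count_list v a \<noteq> 0" for a by (simp add: count_list_0_iff)
    then show ?thesis using cnt m0 by (auto split: if_splits)
  qed
  have sortv: "sort v = map (\<lambda>x. x div m) [0..<k*m]"
  proof (rule properties_for_sort)
    show "mset (map (\<lambda>x. x div m) [0..<k * m]) = mset v"
      unfolding multiset_eq_iff count_mset count_sorted[OF m0] cnt by simp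
    show "sorted (map (\<lambda>x. x div m) [0..<k * m])"
      unfolding sorted_iff_nth_mono by (auto intro: div_le_mono)
  qed
  have dom: "positions i (sort v) = {x. x<k^n \<and> x div k^(n-1) = i}" for i
    unfolding positions_def sortv km m_def[symmetric] by auto
  have pv: "positions i v = {x. x < k*m \<and> v!x = i}" for i
    unfolding positions_def lv by simp
  have cards: "card (positions i (sort v)) = card (positions i v)" for i
    unfolding card_positions by (metis count_mset mset_sort)
  have fin: "finite (positions i w)" for i w unfolding positions_def by simp
  have spp: "std_perm_part v i = canon (positions i (sort v)) (positions i v)" for i
    unfolding std_perm_part_def using the_canon[OF fin fin cards] .
  have ok: "op_inj_pmap (std_perm_part v i) \<and> Domain (std_perm_part v i) = positions i (sort v)
     \<and> Range (std_perm_part v i) = positions i v" for i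
    unfolding spp using canon_ok[OF fin fin cards] .
  have rng: "Range (std_perm_part v i) = {x. x < k*m \<and> v!x = i}" for i using ok pv by simp
  have c1: "std_perm v = (\<Union>i<k. std_perm_part v i)" unfolding std_perm_def setv ..
  have c2: "\<forall>i<k. op_inj_pmap (std_perm_part v i)
         \<and> Domain (std_perm_part v i) = {x. x < k ^ n \<and> x div k ^ (n - 1) = i}"
    using ok dom by blast
  have c3: "\<forall>i<k. \<forall>j<k. i \<noteq> j \<longrightarrow> Range (std_perm_part v i) \<inter> Range (std_perm_part v j) = {}"
    unfolding rng by auto
  have c4: "(\<Union>i<k. Range (std_perm_part v i)) = {..<k ^ n}"
  proof -
    have "x < k*m \<Longrightarrow> v!x < k" for x using setv lv by (metis lessThan_iff nth_mem)
    then show ?thesis unfolding rng km by auto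
  qed
  have c5: "\<forall>i<k. \<forall>j<k ^ (n - 1). \<exists>!x. x \<in> Range (std_perm_part v i) \<and> j * k \<le> x \<and> x \<le> (j + 1) * k - 1"
  proof (intro allI impI)
    fix i j assume i: "i < k" and j: "j < k^(n-1)"
    have wj: "ws!j \<in> G k" using v j by auto
    have "count_list (ws!j) i = 1" using count_G[OF wj] i by simp
    then have "i \<in> set (ws!j)" by (metis count_list_0_iff zero_neq_one)
    then obtain r where r: "r < k" "ws!j!r = i" using wj unfolding G_def by (auto simp: in_set_conv_nth)
    have vx: "v!(j*k+r) = i" using concat_nth[OF lw, of j r] v r j by simp
    have jm: "j < m" using j m_def by simp
    have xb: "j*k+r < k*m"
    proof -
      have "j*k + r < (j+1)*k" using r by simp
      also have "\<dots> \<le> m*k" using jm by (intro mult_le_mono1) simp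
      finally show ?thesis by (simp add: mult.commute)
    qed
    show "\<exists>!x. x \<in> Range (std_perm_part v i) \<and> j * k \<le> x \<and> x \<le> (j + 1) * k - 1"
    proof (rule ex1I[of _ "j*k+r"])
      show "j*k+r \<in> Range (std_perm_part v i) \<and> j * k \<le> j*k+r \<and> j*k+r \<le> (j + 1) * k - 1"
        unfolding rng using vx xb r by auto
    next
      fix y assume y: "y \<in> Range (std_perm_part v i) \<and> j * k \<le> y \<and> y \<le> (j + 1) * k - 1"
      define r' where "r' = y - j*k"
      have r': "r' < k" "y = j*k + r'" using y r'_def assms(1) by auto
      have "v!y = i" using y unfolding rng by auto
      then have "ws!j!r' = i" using concat_nth[OF lw, of j r'] v r' j by simp
      then have "r' = r" using uniq_pos[OF wj r'(1) r(1)] r(2) by simp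
      then show "y = j*k+r" using r' by simp
    qed
  qed
  show ?thesis using c1 c2 c3 c4 c5 by blast
qed

end
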